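(* Let $A$ be a finite alphabet and $\mu$ the uniform (Lebesgue) product measure on $A^\omega$. For each normal infinite word $y$ over $A$, the set $\{x\in A^\omega: \rho(x/y)<\rho(x)\}$ has measure $0$.
   Context: Normal: for every $\ell\ge1$ and $u\in A^\ell$, the number of occurrences of $u$ at positions $i\equiv1\bmod\ell$ in $y[1..n]$, divided by $n/\ell$, tends to $|A|^{-\ell}$. A $k$-automaton $\langle Q,A,\delta,I\rangle$ has finite state set, transitions in $Q\times(A\cup\{\varepsilon\})^k\times Q$, initial states $I$; an infinite run is accepting if it starts in $I$ and all label components are infinite. It is $\ell$-deterministic if $I$ is a singleton and, for two transitions from the same state, $\alpha_j=\varepsilon$ for some $j\le\ell$ implies $\alpha'_j=\varepsilon$, and agreement on the first $\ell$ label components implies agreement on the rest and of targets. $\rho(x)$ is the infimum over injective $1$-deterministic $2$-automata $\mathcal T$ of $\liminf_n|v_1\cdots v_n|/n$ where $q_0\xrightarrow{a_1|v_1}q_1\xrightarrow{a_2|v_2}\cdots$ is the run on $x=a_1a_2\cdots$. A compressor is a $2$-deterministic $3$-automaton $\mathcal C$ (input $x$, oracle $y$, output) injective in $x$ for fixed $y$; $\rho_{\mathcal C}(x/y)=\liminf_n|w_1\cdots w_n|/|\alpha_1\cdots\alpha_n|$ for the accepting run $q_0\xrightarrow{\alpha_1,\beta_1|w_1}q_1\cdots$, and $\rho(x/y)$ is the infimum over compressors. *)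

theory Defs
  imports "HOL-Probability.Probability"
begin

definition normal :: "(nat \<Rightarrow> 'a::finite) \<Rightarrow> bool" where
  "normal y \<longleftrightarrow> (\<forall>l::nat. l \<ge> 1 \<longrightarrow> (\<forall>u::'a list. length u = l \<longrightarrow>
     (\<lambda>n. real (card {m. l * m + l \<le> n \<and> (\<forall>t<l. y (l * m + t) = u ! t)}) / (real n / real l))
       \<longlonglongrightarrow> 1 / real CARD('a) ^ l))"

text \<open>A k-automaton: (Q, delta, I) with state set a finite set of naturals;
  labels are lists of length k over 'a option (None = epsilon).\<close>

type_synonym 'a aut = "nat set \<times> (nat \<times> 'a option list \<times> nat) set \<times> nat set"

definition is_automaton :: "nat \<Rightarrow> 'a aut \<Rightarrow> bool" where
  "is_automaton k T \<longleftrightarrow> (case T of (Q, \<delta>, I) \<Rightarrow>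
     finite Q \<and> I \<subseteq> Q \<and> (\<forall>(p, \<alpha>, q) \<in> \<delta>. p \<in> Q \<and> q \<in> Q \<and> length \<alpha> = k))"

definition deterministic :: "nat \<Rightarrow> 'a aut \<Rightarrow> bool" where
  "deterministic l T \<longleftrightarrow> (case T of (Q, \<delta>, I) \<Rightarrow>
     (\<exists>q0. I = {q0}) \<and>
     (\<forall>p \<alpha> q \<alpha>' q'. (p, \<alpha>, q) \<in> \<delta> \<longrightarrow> (p, \<alpha>', q') \<in> \<delta> \<longrightarrow>
        (\<forall>j<l. \<alpha> ! j = None \<longrightarrow> \<alpha>' ! j = None) \<and>
        (take l \<alpha> = take l \<alpha>' \<longrightarrow> \<alpha> = \<alpha>' \<and> q = q')))"

definition accepting_run :: "nat \<Rightarrow> 'a aut \<Rightarrow> (nat \<Rightarrow> nat) \<Rightarrow> (nat \<Rightarrow> 'a option list) \<Rightarrow> bool" where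
  "accepting_run k T qs als \<longleftrightarrow> (case T of (Q, \<delta>, I) \<Rightarrow>
     qs 0 \<in> I \<and> (\<forall>i. (qs i, als i, qs (Suc i)) \<in> \<delta>) \<and>
     (\<forall>j<k. infinite {i. als i ! j \<noteq> None}))"

definition pref :: "(nat \<Rightarrow> 'a option list) \<Rightarrow> nat \<Rightarrow> nat \<Rightarrow> 'a list" where
  "pref als j n = concat (map (\<lambda>i. case als i ! j of None \<Rightarrow> [] | Some a \<Rightarrow> [a]) [0..<n])"

text \<open>The j-th component of the labels reads the (infinite) word w
  (for accepting runs, the component is infinite, so this determines w).\<close>

definition reads :: "(nat \<Rightarrow> 'a option list) \<Rightarrow> nat \<Rightarrow> (nat \<Rightarrow> 'a) \<Rightarrow> bool" where
  "reads als j w \<longleftrightarrow> (\<forall>n. pref als j n = map w [0..<length (pref als j n)])"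

definition injective_transducer :: "'a aut \<Rightarrow> bool" where
  "injective_transducer T \<longleftrightarrow> (\<forall>qs als qs' als' x x' v.
     accepting_run 2 T qs als \<longrightarrow> accepting_run 2 T qs' als' \<longrightarrow>
     reads als 0 x \<longrightarrow> reads als' 0 x' \<longrightarrow> reads als 1 v \<longrightarrow> reads als' 1 v \<longrightarrow> x = x')"

definition rho :: "(nat \<Rightarrow> 'a::finite) \<Rightarrow> ereal" where
  "rho x = (INF (T, qs, als) \<in> {(T, qs, als). is_automaton 2 T \<and> deterministic 1 T \<and>
              injective_transducer T \<and> accepting_run 2 T qs als \<and> reads als 0 x}.
     liminf (\<lambda>n. ereal (real (length (pref als 1 n)) / real (length (pref als 0 n)))))"

definition injective_compressor :: "'a aut \<Rightarrow> bool" where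
  "injective_compressor C \<longleftrightarrow> (\<forall>qs als qs' als' x x' y w.
     accepting_run 3 C qs als \<longrightarrow> accepting_run 3 C qs' als' \<longrightarrow>
     reads als 0 x \<longrightarrow> reads als' 0 x' \<longrightarrow> reads als 1 y \<longrightarrow> reads als' 1 y \<longrightarrow>
     reads als 2 w \<longrightarrow> reads als' 2 w \<longrightarrow> x = x')"

definition compressor :: "'a aut \<Rightarrow> bool" where
  "compressor C \<longleftrightarrow> is_automaton 3 C \<and> deterministic 2 C \<and> injective_compressor C"

definition rho_cond :: "(nat \<Rightarrow> 'a::finite) \<Rightarrow> (nat \<Rightarrow> 'a) \<Rightarrow> ereal" where
  "rho_cond x y = (INF (C, qs, als) \<in> {(C, qs, als). compressor C \<and>
              accepting_run 3 C qs als \<and> reads als 0 x \<and> reads als 1 y}.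
     liminf (\<lambda>n. ereal (real (length (pref als 2 n)) / real (length (pref als 0 n)))))"

definition word_measure :: "(nat \<Rightarrow> 'a::finite) measure" where
  "word_measure = PiM UNIV (\<lambda>_. uniform_count_measure UNIV)"

end

theory Submission
  imports Defs
begin


abbreviation cnt :: "(nat \<Rightarrow> 'a option list) \<Rightarrow> nat \<Rightarrow> nat \<Rightarrow> nat" where
  "cnt als j n \<equiv> length (pref als j n)"

definition symb :: "'a option \<Rightarrow> 'a list" where
  "symb v = (case v of None \<Rightarrow> [] | Some a \<Rightarrow> [a])"

lemma pref_0[simp]: "pref als j 0 = []"
  by (simp add: pref_def)

lemma pref_Suc: "pref als j (Suc n) = pref als j n @ symb (als n ! j)"
  by (simp add: pref_def symb_def)

lemma pref_add: "pref als j (a + b) = pref als j a @ pref (\<lambda>i. als (a + i)) j b"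
  by (induction b) (simp_all add: pref_Suc)

lemma cnt_Suc: "cnt als j (Suc n) = cnt als j n + (if als n ! j = None then 0 else 1)"
  by (simp add: pref_Suc symb_def split: option.splits)

lemma cnt_mono: "n \<le> n' \<Longrightarrow> cnt als j n \<le> cnt als j n'"
  using pref_add[of als j n "n' - n"] by simp

lemma pref_prefix: "n \<le> n' \<Longrightarrow> pref als j n = take (cnt als j n) (pref als j n')"
  using pref_add[of als j n "n' - n"] by simp

lemma cnt_card: "cnt als j n = card {i. i < n \<and> als i ! j \<noteq> None}"
proof (induction n)
  case 0 then show ?case by simp
next
  case (Suc n)
  have "{i. i < Suc n \<and> als i ! j \<noteq> None} =
        {i. i < n \<and> als i ! j \<noteq> None} \<union> (if als n ! j = None then {} else {n})"
    by (auto simp: less_Suc_eq)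
  then show ?case using Suc by (simp add: cnt_Suc)
qed

lemma cnt_unbounded:
  assumes "infinite {i. als i ! j \<noteq> None}"
  shows "\<exists>n. N \<le> cnt als j n"
proof -
  obtain F where F: "F \<subseteq> {i. als i ! j \<noteq> None}" "card F = N" "finite F"
    using infinite_arbitrarily_large[OF assms] by blast
  define n where "n = Suc (Max (insert 0 F))"
  have "F \<subseteq> {i. i < n \<and> als i ! j \<noteq> None}"
    using F by (auto simp: n_def less_Suc_eq_le)
  then have "N \<le> card {i. i < n \<and> als i ! j \<noteq> None}"
    using F by (metis card_mono finite_Collect_conjI finite_Collect_less_nat)
  then show ?thesis by (auto simp: cnt_card)
qed

lemma cnt_ivt:
  assumes "infinite {i. als i ! j \<noteq> None}" "cnt als j m \<le> q"
  shows "\<exists>m'\<ge>m. cnt als j m' = q"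
proof -
  obtain n where n: "q \<le> cnt als j n" using cnt_unbounded[OF assms(1)] by blast
  define m' where "m' = (LEAST k. q \<le> cnt als j k)"
  have q: "q \<le> cnt als j m'" unfolding m'_def by (rule LeastI[of _ n]) (rule n)
  show ?thesis
  proof (cases "m' = 0")
    case True then show ?thesis using q assms(2) cnt_mono[of 0 m als j]
      by (intro exI[of _ m]) auto
  next
    case False
    then obtain k where k: "m' = Suc k" by (cases m') auto
    have "\<not> q \<le> cnt als j k" using k unfolding m'_def
      using not_less_Least[of k "\<lambda>k. q \<le> cnt als j k"] k unfolding m'_def by simp
    then have e: "cnt als j m' = q" using q k cnt_Suc[of als j k] by (auto split: if_splits)
    show ?thesis
    proof (cases "m \<le> m'")
      case True then show ?thesis using e by auto
    next
      case False
      then have "cnt als j m' \<le> cnt als j m" by (intro cnt_mono) auto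
      then show ?thesis using e assms(2) by (intro exI[of _ m]) auto
    qed
  qed
qed

lemma reads_iff_pref: "reads als j w \<longleftrightarrow> (\<forall>n. \<forall>k < cnt als j n. pref als j n ! k = w k)"
  unfolding reads_def
proof (intro iffI allI impI)
  fix n k assume A: "\<forall>n. pref als j n = map w [0..<cnt als j n]" and k: "k < cnt als j n"
  define c where "c = cnt als j n"
  have "pref als j n = map w [0..<c]" using A unfolding c_def by blast
  then show "pref als j n ! k = w k" using k unfolding c_def[symmetric] by simp
next
  fix n assume A: "\<forall>n. \<forall>k<cnt als j n. pref als j n ! k = w k"
  show "pref als j n = map w [0..<cnt als j n]"
  proof (rule nth_equalityI)
    show "length (pref als j n) = length (map w [0..<cnt als j n])" by simp
    fix i assume "i < length (pref als j n)"
    then show "pref als j n ! i = map w [0..<cnt als j n] ! i" using A by simp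
  qed
qed

lemma reads_nth:
  assumes "reads als j w" "k < cnt als j n"
  shows "pref als j n ! k = w k"
  using assms reads_iff_pref by blast

lemma reads_Some:
  assumes "reads als j w" "als n ! j = Some a"
  shows "w (cnt als j n) = a"
proof -
  have "cnt als j n < cnt als j (Suc n)" using assms(2) by (simp add: cnt_Suc)
  then have "pref als j (Suc n) ! cnt als j n = w (cnt als j n)"
    using reads_nth[OF assms(1)] by blast
  then show ?thesis using assms(2) by (simp add: pref_Suc symb_def)
qed

lemma reads_exists:
  assumes "infinite {i. als i ! j \<noteq> None}"
  shows "\<exists>w. reads als j w"
proof -
  define w where "w k = pref als j (SOME n. k < cnt als j n) ! k" for k
  have ex: "\<exists>n. k < cnt als j n" for k using cnt_unbounded[OF assms, of "Suc k"] by (auto simp: Suc_le_eq)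
  have wk: "pref als j n ! k = w k" if "k < cnt als j n" for n k
  proof -
    define n' where "n' = (SOME n. k < cnt als j n)"
    have kn': "k < cnt als j n'" unfolding n'_def using someI_ex[OF ex] .
    have "pref als j n ! k = pref als j (max n n') ! k"
      using pref_prefix[of n "max n n'" als j] that by (metis max.cobounded1 nth_take)
    also have "\<dots> = pref als j n' ! k"
      using pref_prefix[of n' "max n n'" als j] kn' by (metis max.cobounded2 nth_take)
    finally show ?thesis unfolding w_def n'_def .
  qed
  have "reads als j w" unfolding reads_def
  proof
    fix n show "pref als j n = map w [0..<cnt als j n]"
      by (rule nth_equalityI) (auto simp: wk)
  qed
  then show ?thesis by blast
qed



lemma take2_3: "length (\<alpha>::'b list) = 3 \<Longrightarrow> take 2 \<alpha> = [\<alpha>!0, \<alpha>!1]"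
  by (auto simp: numeral_3_eq_3 length_Suc_conv)

lemma aut_len:
  assumes "is_automaton k (Q,\<delta>,I)" "(p,\<alpha>,q) \<in> \<delta>"
  shows "length \<alpha> = k" "p \<in> Q" "q \<in> Q"
  using assms unfolding is_automaton_def by auto

lemma det_none:
  assumes "deterministic l (Q,\<delta>,I)" "(p,\<alpha>,q) \<in> \<delta>" "(p,\<alpha>',q') \<in> \<delta>" "j < l"
  shows "\<alpha> ! j = None \<longleftrightarrow> \<alpha>' ! j = None"
  using assms unfolding deterministic_def by blast

lemma det_eq:
  assumes "deterministic l (Q,\<delta>,I)" "(p,\<alpha>,q) \<in> \<delta>" "(p,\<alpha>',q') \<in> \<delta>" "take l \<alpha> = take l \<alpha>'"
  shows "\<alpha> = \<alpha>' \<and> q = q'"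
  using assms unfolding deterministic_def by blast

lemma follow:
  assumes aut: "is_automaton 3 (Q,\<delta>,I)" and det: "deterministic 2 (Q,\<delta>,I)"
  and tr: "\<forall>i. (qs i, als i, qs (Suc i)) \<in> \<delta>" and tr': "\<forall>i. (qs' i, als' i, qs' (Suc i)) \<in> \<delta>"
  and ry: "reads als 1 y" and ry': "reads als' 1 y"
  and st: "qs m = qs' m'"
  and noinp: "\<forall>i<d. als (m+i) ! 0 = None"
  and win: "\<forall>t. cnt als 1 m + t < cnt als 1 (m+d) \<longrightarrow> y (cnt als 1 m + t) = y (cnt als' 1 m' + t)"
  shows "i \<le> d \<Longrightarrow> qs' (m'+i) = qs (m+i) \<and> cnt als' 1 (m'+i) + cnt als 1 m = cnt als 1 (m+i) + cnt als' 1 m'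
     \<and> (\<forall>i'<i. als' (m'+i') = als (m+i'))"
proof (induction i)
  case 0 then show ?case using st by simp
next
  case (Suc i)
  then have i: "i < d" by simp
  from Suc.IH i have s: "qs' (m'+i) = qs (m+i)" and pr: "\<forall>i'<i. als' (m'+i') = als (m+i')"
    and c: "cnt als' 1 (m'+i) + cnt als 1 m = cnt als 1 (m+i) + cnt als' 1 m'" by auto
  define \<alpha> where "\<alpha> = als (m+i)"
  define \<alpha>' where "\<alpha>' = als' (m'+i)"
  have t1: "(qs (m+i), \<alpha>, qs (Suc (m+i))) \<in> \<delta>" using tr \<alpha>_def by blast
  have t2: "(qs (m+i), \<alpha>', qs' (Suc (m'+i))) \<in> \<delta>" using tr' \<alpha>'_def s by metis
  have l1: "length \<alpha> = 3" and l2: "length \<alpha>' = 3" using aut_len[OF aut t1] aut_len[OF aut t2] by auto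
  have a0: "\<alpha> ! 0 = None" using noinp i \<alpha>_def by auto
  then have a0': "\<alpha>' ! 0 = None" using det_none[OF det t1 t2, of 0] by auto
  have a1: "\<alpha>' ! 1 = \<alpha> ! 1"
  proof (cases "\<alpha> ! 1")
    case None then show ?thesis using det_none[OF det t1 t2, of 1] by auto
  next
    case (Some b)
    then obtain b' where b': "\<alpha>' ! 1 = Some b'" using det_none[OF det t1 t2, of 1] by auto
    have b: "y (cnt als 1 (m+i)) = b" using reads_Some[OF ry] Some \<alpha>_def by blast
    have bb: "y (cnt als' 1 (m'+i)) = b'" using reads_Some[OF ry'] b' \<alpha>'_def by blast
    have "cnt als 1 (Suc (m+i)) = Suc (cnt als 1 (m+i))" using Some \<alpha>_def by (simp add: cnt_Suc)
    moreover have "cnt als 1 (Suc (m+i)) \<le> cnt als 1 (m+d)" using i by (intro cnt_mono) auto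
    moreover have "cnt als 1 m \<le> cnt als 1 (m+i)" by (intro cnt_mono) auto
    ultimately have "y (cnt als 1 m + (cnt als 1 (m+i) - cnt als 1 m)) =
                     y (cnt als' 1 m' + (cnt als 1 (m+i) - cnt als 1 m))"
      using win by (metis Suc_le_lessD le_add_diff_inverse)
    moreover have "cnt als' 1 m' + (cnt als 1 (m+i) - cnt als 1 m) = cnt als' 1 (m'+i)"
      using c \<open>cnt als 1 m \<le> cnt als 1 (m+i)\<close> by linarith
    ultimately show ?thesis using b bb b' Some \<open>cnt als 1 m \<le> cnt als 1 (m+i)\<close> by auto
  qed
  have "take 2 \<alpha> = take 2 \<alpha>'" using take2_3[OF l1] take2_3[OF l2] a0 a0' a1 by simp
  from det_eq[OF det t1 t2 this] have eq: "\<alpha> = \<alpha>'" "qs (Suc (m+i)) = qs' (Suc (m'+i))" by auto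
  have "cnt als' 1 (m'+Suc i) + cnt als 1 m = cnt als 1 (m+Suc i) + cnt als' 1 m'"
    using c eq(1) \<alpha>_def \<alpha>'_def by (simp add: cnt_Suc)
  then show ?case using eq \<alpha>_def \<alpha>'_def pr by (simp add: less_Suc_eq)
qed

lemma det_inp:
  assumes "deterministic 2 (Q,\<delta>,I)" "(p,\<alpha>,q) \<in> \<delta>" "(p,\<alpha>',q') \<in> \<delta>" "\<alpha> ! 0 \<noteq> None"
  shows "\<alpha>' ! 0 \<noteq> None"
  using det_none[OF assms(1,2,3), of 0] assms(4) by auto



definition Res :: "'a aut \<Rightarrow> (nat \<Rightarrow> 'a) \<Rightarrow> nat \<Rightarrow> 'a list \<Rightarrow> bool" where
  "Res C y s u \<longleftrightarrow> (\<forall>qs als m. accepting_run 3 C qs als \<and> reads als 1 y \<and> qs m = s \<and>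
      (\<forall>t<length u. y (cnt als 1 m + t) = u!t) \<longrightarrow>
      (\<exists>m1\<ge>m. als m1 ! 0 \<noteq> None \<and> cnt als 1 m1 \<le> cnt als 1 m + length u))"

lemma Res_mono: "Res C y s u \<Longrightarrow> Res C y s (u @ v)"
  unfolding Res_def
proof (intro allI impI)
  fix qs als m
  assume R: "\<forall>qs als m. accepting_run 3 C qs als \<and> reads als 1 y \<and> qs m = s \<and>
      (\<forall>t<length u. y (cnt als 1 m + t) = u!t) \<longrightarrow>
      (\<exists>m1\<ge>m. als m1 ! 0 \<noteq> None \<and> cnt als 1 m1 \<le> cnt als 1 m + length u)"
    and H: "accepting_run 3 C qs als \<and> reads als 1 y \<and> qs m = s \<and>
      (\<forall>t<length (u@v). y (cnt als 1 m + t) = (u@v)!t)"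
  then have "\<forall>t<length u. y (cnt als 1 m + t) = u!t" by (auto simp: nth_append)
  with R H obtain m1 where "m1 \<ge> m" "als m1 ! 0 \<noteq> None" "cnt als 1 m1 \<le> cnt als 1 m + length u" by blast
  then show "\<exists>m1\<ge>m. als m1 ! 0 \<noteq> None \<and> cnt als 1 m1 \<le> cnt als 1 m + length (u@v)"
    by (intro exI[of _ m1]) auto
qed

lemma acc_tr: "accepting_run k (Q,\<delta>,I) qs als \<Longrightarrow> (qs i, als i, qs (Suc i)) \<in> \<delta>"
  unfolding accepting_run_def by auto

lemma acc_inf: "accepting_run k (Q,\<delta>,I) qs als \<Longrightarrow> j < k \<Longrightarrow> infinite {i. als i ! j \<noteq> None}"
  unfolding accepting_run_def by auto

lemma Res_extend:
  assumes aut: "is_automaton 3 (Q,\<delta>,I)" and det: "deterministic 2 (Q,\<delta>,I)"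
  shows "\<exists>v. Res (Q,\<delta>,I) y s (u @ v)"
proof (cases "Res (Q,\<delta>,I) y s u")
  case True then show ?thesis by (intro exI[of _ "[]"]) simp
next
  case False
  then obtain qs als m where acc: "accepting_run 3 (Q,\<delta>,I) qs als" and ry: "reads als 1 y"
    and sm: "qs m = s" and wu: "\<forall>t<length u. y (cnt als 1 m + t) = u!t"
    and no: "\<not> (\<exists>m1\<ge>m. als m1 ! 0 \<noteq> None \<and> cnt als 1 m1 \<le> cnt als 1 m + length u)"
    unfolding Res_def by blast
  have inf0: "infinite {i. als i ! 0 \<noteq> None}" using acc_inf[OF acc] by simp
  then have "\<exists>i0\<ge>m. als i0 ! 0 \<noteq> None" by (simp add: infinite_nat_iff_unbounded_le)
  then obtain i0 where "i0 \<ge> m" "als i0 ! 0 \<noteq> None" by blast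
  define m1 where "m1 = (LEAST i. m \<le> i \<and> als i ! 0 \<noteq> None)"
  have m1: "m \<le> m1" "als m1 ! 0 \<noteq> None"
    using LeastI[of "\<lambda>i. m \<le> i \<and> als i ! 0 \<noteq> None" i0] \<open>i0 \<ge> m\<close> \<open>als i0 ! 0 \<noteq> None\<close>
    unfolding m1_def by auto
  have noinp: "\<forall>i<m1 - m. als (m+i) ! 0 = None"
  proof (intro allI impI)
    fix i assume "i < m1 - m"
    then have "m + i < m1" by simp
    then show "als (m+i) ! 0 = None" using not_less_Least[of "m+i" "\<lambda>i. m \<le> i \<and> als i ! 0 \<noteq> None"]
      unfolding m1_def by auto
  qed
  define p where "p = cnt als 1 m"
  define P1 where "P1 = cnt als 1 m1"
  have big: "p + length u < P1" using no m1 unfolding p_def P1_def by force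
  define v where "v = map y [p + length u..<P1]"
  have luv: "length (u @ v) = P1 - p" using big unfolding v_def by simp
  have wuv: "(u @ v) ! t = y (p + t)" if "t < P1 - p" for t
  proof (cases "t < length u")
    case True then show ?thesis using wu unfolding p_def by (simp add: nth_append)
  next
    case False
    then have "t - length u < P1 - (p + length u)" using that by simp
    then show ?thesis using False unfolding v_def by (simp add: nth_append)
  qed
  have "Res (Q,\<delta>,I) y s (u @ v)"
    unfolding Res_def
  proof (intro allI impI)
    fix qs' als' m'
    assume H: "accepting_run 3 (Q,\<delta>,I) qs' als' \<and> reads als' 1 y \<and> qs' m' = s \<and>
      (\<forall>t<length (u@v). y (cnt als' 1 m' + t) = (u@v)!t)"
    have tr: "\<forall>i. (qs i, als i, qs (Suc i)) \<in> \<delta>" using acc acc_tr by blast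
    have tr': "\<forall>i. (qs' i, als' i, qs' (Suc i)) \<in> \<delta>" using H acc_tr by blast
    have win: "\<forall>t. cnt als 1 m + t < cnt als 1 (m + (m1 - m)) \<longrightarrow> y (cnt als 1 m + t) = y (cnt als' 1 m' + t)"
    proof (intro allI impI)
      fix t assume "cnt als 1 m + t < cnt als 1 (m + (m1 - m))"
      then have t: "t < P1 - p" using m1 unfolding P1_def p_def by simp
      then have "y (cnt als' 1 m' + t) = (u@v)!t" using H luv by auto
      then show "y (cnt als 1 m + t) = y (cnt als' 1 m' + t)" using wuv[OF t] unfolding p_def by simp
    qed
    have F: "qs' (m' + (m1 - m)) = qs (m + (m1 - m)) \<and>
       cnt als' 1 (m' + (m1 - m)) + cnt als 1 m = cnt als 1 (m + (m1 - m)) + cnt als' 1 m'"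
    proof -
      have ry': "reads als' 1 y" and st: "qs m = qs' m'" using H sm by auto
      show ?thesis using follow[OF aut det tr tr' ry ry' st noinp win, of "m1 - m"] by auto
    qed
    have e: "m + (m1 - m) = m1" using m1 by simp
    have t1: "(qs m1, als m1, qs (Suc m1)) \<in> \<delta>" using tr by blast
    have t2: "(qs m1, als' (m' + (m1 - m)), qs' (Suc (m' + (m1 - m)))) \<in> \<delta>"
      using tr' F e by metis
    have "als' (m' + (m1 - m)) ! 0 \<noteq> None" using det_inp[OF det t1 t2 m1(2)] .
    moreover have "cnt als' 1 (m' + (m1 - m)) \<le> cnt als' 1 m' + length (u @ v)"
    proof -
      have "cnt als 1 (m + (m1 - m)) = P1" using e unfolding P1_def by simp
      then show ?thesis using F luv big unfolding p_def by linarith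
    qed
    ultimately show "\<exists>m1'\<ge>m'. als' m1' ! 0 \<noteq> None \<and> cnt als' 1 m1' \<le> cnt als' 1 m' + length (u @ v)"
      by (intro exI[of _ "m' + (m1 - m)"]) auto
  qed
  then show ?thesis by blast
qed

lemma universal_finite:
  assumes aut: "is_automaton 3 (Q,\<delta>,I)" and det: "deterministic 2 (Q,\<delta>,I)" and fin: "finite S"
  shows "\<exists>u. \<forall>s\<in>S. Res (Q,\<delta>,I) y s u"
  using fin
proof (induction S rule: finite_induct)
  case empty then show ?case by simp
next
  case (insert s S)
  then obtain u where u: "\<forall>s\<in>S. Res (Q,\<delta>,I) y s u" by blast
  obtain v where v: "Res (Q,\<delta>,I) y s (u @ v)" using Res_extend[OF aut det] by blast
  show ?case using u v Res_mono by (intro exI[of _ "u@v"]) blast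
qed

lemma universal:
  assumes aut: "is_automaton 3 (Q,\<delta>,I)" and det: "deterministic 2 (Q,\<delta>,I)"
  shows "\<exists>u. u \<noteq> [] \<and> (\<forall>s\<in>Q. Res (Q,\<delta>,I) y s u)"
proof -
  have "finite Q" using aut unfolding is_automaton_def by auto
  then obtain u where "\<forall>s\<in>Q. Res (Q,\<delta>,I) y s u" using universal_finite[OF aut det] by blast
  then show ?thesis using Res_mono by (intro exI[of _ "u @ [y 0]"]) blast
qed



lemma normal_gap:
  fixes y :: "nat \<Rightarrow> 'a::finite" and \<epsilon> :: real
  assumes nor: "normal y" and u: "u \<noteq> []" and eps: "\<epsilon> > 0"
  shows "\<exists>D::real. \<forall>p. \<exists>j. p \<le> length u * j \<and> real (length u * j) \<le> (1+\<epsilon>) * real p + D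
            \<and> (\<forall>t<length u. y (length u * j + t) = u!t)"
proof -
  define L where "L = length u"
  have L1: "L \<ge> 1" using u unfolding L_def by (cases u) auto
  define W where "W j \<longleftrightarrow> (\<forall>t<L. y (L * j + t) = u!t)" for j
  define c where "c n = card {j. L * j + L \<le> n \<and> W j}" for n
  define \<beta> :: real where "\<beta> = 1 / real CARD('a) ^ L"
  have \<beta>pos: "\<beta> > 0" unfolding \<beta>_def by simp
  have lim: "(\<lambda>n. real (c n) / (real n / real L)) \<longlonglongrightarrow> \<beta>"
    using nor L1 unfolding normal_def c_def W_def \<beta>_def L_def by blast
  define \<eta> where "\<eta> = \<epsilon> / (2 * (2 + \<epsilon>))"
  have \<eta>pos: "\<eta> > 0" using eps unfolding \<eta>_def by simp
  obtain N where N: "\<forall>n\<ge>N. norm (real (c n) / (real n / real L) - \<beta>) < \<beta> * \<eta>"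
    using LIMSEQ_D[OF lim, of "\<beta> * \<eta>"] \<beta>pos \<eta>pos by auto
  have finc: "finite {j. L * j + L \<le> n \<and> W j}" for n
  proof (rule finite_subset[of _ "{..n}"])
    show "{j. L * j + L \<le> n \<and> W j} \<subseteq> {..n}"
    proof
      fix x assume "x \<in> {j. L * j + L \<le> n \<and> W j}"
      then have a: "L * x \<le> n" by auto
      have "1 * x \<le> L * x" using L1 by (intro mult_le_mono1)
      then have "x \<le> L * x" by simp
      from order_trans[OF this a] show "x \<in> {..n}" by simp
    qed
  qed simp
  have key: "c n \<le> c p + 1" if no: "\<not> (\<exists>j. p \<le> L * j \<and> L * j + L \<le> n \<and> W j)" for n p
  proof -
    have "{j. L * j + L \<le> n \<and> W j} \<subseteq> {j. L * j + L \<le> p \<and> W j} \<union> {p div L}"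
    proof
      fix j assume j: "j \<in> {j. L * j + L \<le> n \<and> W j}"
      show "j \<in> {j. L * j + L \<le> p \<and> W j} \<union> {p div L}"
      proof (cases "L * j + L \<le> p")
        case True then show ?thesis using j by auto
      next
        case False
        then have "\<not> p \<le> L * j" using no j by blast
        then have "L * j < p" by simp
        moreover have "p < L * Suc j" using False by simp
        ultimately have "p div L = j" by (intro div_nat_eqI) auto
        then show ?thesis by auto
      qed
    qed
    then have "c n \<le> card ({j. L * j + L \<le> p \<and> W j} \<union> {p div L})"
      unfolding c_def by (intro card_mono) (auto simp: finc)
    also have "\<dots> \<le> card {j. L * j + L \<le> p \<and> W j} + card {p div L}" by (rule card_Un_le)
    also have "\<dots> = c p + 1" unfolding c_def by simp
    finally show ?thesis .
  qed
  have bounds: "(1 - \<eta>) * \<beta> * n / L < c n \<and> c n < (1 + \<eta>) * \<beta> * n / L" if "n \<ge> N" "n \<ge> 1" for n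
  proof -
    have h: "\<bar>real (c n) * L / n - \<beta>\<bar> < \<beta> * \<eta>" using N that by simp
    have np: "real n > 0" using that by simp
    have Lp: "real L > 0" using L1 by simp
    from h have "(1 - \<eta>) * \<beta> < real (c n) * L / n" "real (c n) * L / n < (1 + \<eta>) * \<beta>"
      by (auto simp: algebra_simps abs_less_iff)
    then show ?thesis using np Lp by (auto simp: field_simps)
  qed
  define P0 :: real where "P0 = max (max (real N) 1) (2 * L / (\<beta> * \<epsilon>))"
  have large: "\<exists>j. p \<le> L * j \<and> real (L * j) \<le> (1 + \<epsilon>) * p + 1 \<and> W j" if p: "real p \<ge> P0" for p
  proof -
    define n where "n = nat \<lceil>(1 + \<epsilon>) * p\<rceil>"
    have p3: "real N \<le> real p" "1 \<le> real p" "2 * L / (\<beta> * \<epsilon>) \<le> real p"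
      using p unfolding P0_def by auto
    have be: "\<beta> * \<epsilon> > 0" using \<beta>pos eps by simp
    have pN: "p \<ge> N" "p \<ge> 1" "real p * (\<beta> * \<epsilon>) \<ge> 2 * L"
      using p3(1,2) apply simp_all
      using p3(3) be by (simp add: pos_divide_le_eq)
    have ge0: "(1 + \<epsilon>) * p \<ge> 0" using eps by simp
    have rn: "real n = real_of_int \<lceil>(1 + \<epsilon>) * p\<rceil>" unfolding n_def
      using ge0 by simp
    have n1: "real n \<ge> (1 + \<epsilon>) * p" "real n \<le> (1 + \<epsilon>) * p + 1" unfolding rn by linarith+
    have "(1 + \<epsilon>) * p \<ge> p" using eps by (simp add: algebra_simps)
    then have "real n \<ge> real p" using n1 by linarith
    then have "n \<ge> p" by simp
    then have nN: "n \<ge> N" "n \<ge> 1" using pN by auto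
    show ?thesis
    proof (rule ccontr)
      assume nt: "\<not> ?thesis"
      have no: "\<not> (\<exists>j. p \<le> L * j \<and> L * j + L \<le> n \<and> W j)"
      proof
        assume "\<exists>j. p \<le> L * j \<and> L * j + L \<le> n \<and> W j"
        then obtain j where j: "p \<le> L * j" "L * j + L \<le> n" "W j" by blast
        then have "L * j \<le> n" by simp
        then have "real (L * j) \<le> real n" by (rule of_nat_mono)
        then have "real (L * j) \<le> (1 + \<epsilon>) * p + 1" using n1 by linarith
        then show False using j nt by blast
      qed
      have "real (c n) \<le> real (c p) + 1" using key[OF no] by simp
      moreover have "(1 - \<eta>) * \<beta> * n / L < c n" using bounds[OF nN] by blast
      moreover have "c p < (1 + \<eta>) * \<beta> * p / L" using bounds pN by blast
      ultimately have A: "(1 - \<eta>) * \<beta> * n / L < (1 + \<eta>) * \<beta> * p / L + 1" by linarith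
      have Lp: "real L > 0" using L1 by simp
      have \<eta>1: "\<eta> < 1" using eps unfolding \<eta>_def by (simp add: field_simps)
      have "(1 - \<eta>) * \<beta> * ((1 + \<epsilon>) * p) \<le> (1 - \<eta>) * \<beta> * n"
        using n1 \<eta>1 \<beta>pos by (intro mult_left_mono) auto
      have A': "(1 - \<eta>) * \<beta> * n < (1 + \<eta>) * \<beta> * p + L"
      proof -
        have "(1 - \<eta>) * \<beta> * n / L < ((1 + \<eta>) * \<beta> * p + L) / L"
          using A Lp by (simp add: add_divide_distrib)
        then show ?thesis using Lp by (simp add: divide_less_cancel)
      qed
      have B: "(1 - \<eta>) * \<beta> * ((1 + \<epsilon>) * p) < (1 + \<eta>) * \<beta> * p + L"
        using A' \<open>(1 - \<eta>) * \<beta> * ((1 + \<epsilon>) * p) \<le> (1 - \<eta>) * \<beta> * n\<close> by linarith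
      have e1: "\<eta> * (2 + \<epsilon>) = \<epsilon> / 2" unfolding \<eta>_def using eps by (simp add: field_simps)
      have "(1 - \<eta>) * (1 + \<epsilon>) - (1 + \<eta>) = \<epsilon> - \<eta> * (2 + \<epsilon>)" by (simp add: algebra_simps)
      then have "(1 - \<eta>) * (1 + \<epsilon>) - (1 + \<eta>) = \<epsilon> / 2" using e1 by simp
      then have "(1 - \<eta>) * \<beta> * ((1 + \<epsilon>) * p) - (1 + \<eta>) * \<beta> * p = \<beta> * p * (\<epsilon> / 2)"
        by (simp add: algebra_simps) (metis (no_types, opaque_lifting) mult.assoc mult.commute distrib_left)
      with B have "\<beta> * p * (\<epsilon> / 2) < L" by linarith
      then show False using pN(3) by (simp add: field_simps)
    qed
  qed
  define p0 where "p0 = nat \<lceil>P0\<rceil>"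
  obtain j0 where j0: "p0 \<le> L * j0" "real (L * j0) \<le> (1 + \<epsilon>) * p0 + 1" "W j0"
    using large[of p0] unfolding p0_def by (metis of_nat_ceiling)
  define D where "D = (1 + \<epsilon>) * p0 + 1"
  have "\<forall>p. \<exists>j. p \<le> L * j \<and> real (L * j) \<le> (1+\<epsilon>) * p + D \<and> W j"
  proof
    fix p
    show "\<exists>j. p \<le> L * j \<and> real (L * j) \<le> (1+\<epsilon>) * p + D \<and> W j"
    proof (cases "real p \<ge> P0")
      case True
      then obtain j where "p \<le> L * j" "real (L * j) \<le> (1 + \<epsilon>) * p + 1" "W j" using large by blast
      moreover have "1 \<le> D" unfolding D_def using eps by simp
      ultimately show ?thesis by (intro exI[of _ j]) auto
    next
      case False
      then have "p \<le> p0" unfolding p0_def by linarith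
      moreover have "0 \<le> (1+\<epsilon>) * p" using eps by simp
      ultimately show ?thesis using j0 unfolding D_def by (intro exI[of _ j0]) auto
    qed
  qed
  then show ?thesis unfolding L_def W_def by blast
qed



lemma wait:
  assumes aut: "is_automaton 3 (Q,\<delta>,I)"
    and R: "\<forall>s\<in>Q. Res (Q,\<delta>,I) y s u"
    and gap: "\<forall>p. \<exists>j. p \<le> length u * j \<and> real (length u * j) \<le> (1+\<epsilon>) * real p + D
            \<and> (\<forall>t<length u. y (length u * j + t) = u!t)"
    and acc: "accepting_run 3 (Q,\<delta>,I) qs als" and ry: "reads als 1 y"
  shows "\<exists>m1\<ge>m. als m1 ! 0 \<noteq> None \<and> real (cnt als 1 m1) \<le> (1+\<epsilon>) * real (cnt als 1 m) + (D + length u)"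
proof -
  obtain j where j: "cnt als 1 m \<le> length u * j" "real (length u * j) \<le> (1+\<epsilon>) * real (cnt als 1 m) + D"
    "\<forall>t<length u. y (length u * j + t) = u!t" using gap by blast
  have inf1: "infinite {i. als i ! 1 \<noteq> None}" using acc_inf[OF acc] by simp
  obtain m' where m': "m' \<ge> m" "cnt als 1 m' = length u * j" using cnt_ivt[OF inf1 j(1)] by blast
  have "(qs m', als m', qs (Suc m')) \<in> \<delta>" using acc_tr[OF acc] .
  then have "qs m' \<in> Q" using aut_len[OF aut] by blast
  then have "Res (Q,\<delta>,I) y (qs m') u" using R by blast
  moreover have "\<forall>t<length u. y (cnt als 1 m' + t) = u!t" using j(3) m'(2) by simp
  ultimately have "\<exists>m1\<ge>m'. als m1 ! 0 \<noteq> None \<and> cnt als 1 m1 \<le> cnt als 1 m' + length u"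
    unfolding Res_def using acc ry by blast
  then obtain m1 where m1: "m1 \<ge> m'" "als m1 ! 0 \<noteq> None" "cnt als 1 m1 \<le> cnt als 1 m' + length u"
    by blast
  have "cnt als 1 m1 \<le> length u * j + length u" using m1(3) m'(2) by simp
  then have "real (cnt als 1 m1) \<le> real (length u * j + length u)" by (rule of_nat_mono)
  then have "real (cnt als 1 m1) \<le> real (length u * j) + length u" by simp
  then show ?thesis using m1 m' j(2) by (intro exI[of _ m1]) auto
qed

lemma cnt0_before:
  assumes "cnt als 0 m > cnt als 0 m1" shows "m1 < m"
proof (rule ccontr)
  assume "\<not> m1 < m" then have "cnt als 0 m \<le> cnt als 0 m1" by (intro cnt_mono) auto
  then show False using assms by simp
qed

lemma pos_bound:
  fixes \<epsilon> E :: real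
  assumes eps: "\<epsilon> > 0" and E: "E \<ge> 0"
    and W: "\<forall>m. \<exists>m1\<ge>m. als m1 ! 0 \<noteq> None \<and> real (cnt als 1 m1) \<le> (1+\<epsilon>) * real (cnt als 1 m) + E"
  shows "\<forall>m. cnt als 0 m = n \<longrightarrow> real (cnt als 1 m) + (1+\<epsilon>+E)/\<epsilon> \<le> (E + (1+\<epsilon>+E)/\<epsilon>) * (1+\<epsilon>)^n"
proof (induction n)
  define c where "c = (1+\<epsilon>+E)/\<epsilon>"
  case 0
  show ?case
  proof (intro allI impI)
    fix m assume m: "cnt als 0 m = 0"
    obtain m1 where m1: "als m1 ! 0 \<noteq> None" "real (cnt als 1 m1) \<le> (1+\<epsilon>) * real (cnt als 1 0) + E"
      using W by blast
    have "cnt als 0 (Suc m1) = cnt als 0 m1 + 1" using m1(1) by (simp add: cnt_Suc)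
    then have "cnt als 0 (Suc m1) > cnt als 0 m" using m by linarith
    then have "m < Suc m1" by (rule cnt0_before)
    then have "cnt als 1 m \<le> cnt als 1 m1" by (intro cnt_mono) auto
    then show "real (cnt als 1 m) + (1+\<epsilon>+E)/\<epsilon> \<le> (E + (1+\<epsilon>+E)/\<epsilon>) * (1+\<epsilon>)^0"
      using m1(2) by simp
  qed
next
  case (Suc n)
  define c where "c = (1+\<epsilon>+E)/\<epsilon>"
  show ?case
  proof (intro allI impI)
    fix m assume m: "cnt als 0 m = Suc n"
    define t where "t = (LEAST k. cnt als 0 k = Suc n)"
    have t: "cnt als 0 t = Suc n" unfolding t_def using LeastI[of "\<lambda>k. cnt als 0 k = Suc n" m] m by blast
    have "t \<noteq> 0" using t by (cases t) auto
    then obtain t' where t': "t = Suc t'" by (cases t) auto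
    have ne: "cnt als 0 t' \<noteq> Suc n" using not_less_Least[of t' "\<lambda>k. cnt als 0 k = Suc n"] t' unfolding t_def by auto
    have "cnt als 0 t' \<le> cnt als 0 t" by (intro cnt_mono) (simp add: t')
    moreover have "cnt als 0 t \<le> cnt als 0 t' + 1" using t' by (simp add: cnt_Suc)
    ultimately have ct': "cnt als 0 t' = n" using ne t by linarith
    have IH: "real (cnt als 1 t') + c \<le> (E + c) * (1+\<epsilon>)^n" using Suc.IH ct' unfolding c_def by blast
    have c1: "cnt als 1 t \<le> cnt als 1 t' + 1" using t' by (simp add: cnt_Suc)
    obtain m1 where m1: "m1 \<ge> t" "als m1 ! 0 \<noteq> None" "real (cnt als 1 m1) \<le> (1+\<epsilon>) * real (cnt als 1 t) + E"
      using W by blast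
    have "cnt als 0 t \<le> cnt als 0 m1" using m1(1) by (rule cnt_mono)
    moreover have "cnt als 0 (Suc m1) = cnt als 0 m1 + 1" using m1(2) by (simp add: cnt_Suc)
    ultimately have "cnt als 0 (Suc m1) > cnt als 0 m" using m t by linarith
    then have "m < Suc m1" by (rule cnt0_before)
    then have "cnt als 1 m \<le> cnt als 1 m1" by (intro cnt_mono) auto
    then have "real (cnt als 1 m) \<le> (1+\<epsilon>) * real (cnt als 1 t) + E" using m1(3) by linarith
    also have "\<dots> \<le> (1+\<epsilon>) * (real (cnt als 1 t') + 1) + E"
      using c1 eps by (intro add_right_mono mult_left_mono) auto
    finally have A: "real (cnt als 1 m) + c \<le> (1+\<epsilon>) * (real (cnt als 1 t') + 1) + E + c" by simp
    have "(1+\<epsilon>) * (real (cnt als 1 t') + 1) + E + c = (1+\<epsilon>) * (real (cnt als 1 t') + c)"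
      unfolding c_def using eps by (simp add: field_simps)
    also have "\<dots> \<le> (1+\<epsilon>) * ((E + c) * (1+\<epsilon>)^n)" using IH eps by (intro mult_left_mono) auto
    also have "\<dots> = (E + c) * (1+\<epsilon>)^Suc n" by simp
    finally show "real (cnt als 1 m) + (1+\<epsilon>+E)/\<epsilon> \<le> (E + (1+\<epsilon>+E)/\<epsilon>) * (1+\<epsilon>)^Suc n"
      using A unfolding c_def by linarith
  qed
qed



lemma pref_cong: "(\<And>i. i < n \<Longrightarrow> f i = g i) \<Longrightarrow> pref f j n = pref g j n"
  unfolding pref_def by (intro arg_cong[where f=concat] map_cong) auto

lemma reads_pref_eq: "reads als j w \<Longrightarrow> pref als j n = map w [0..<cnt als j n]"
  unfolding reads_def by blast

lemma unbounded_inf: "(\<forall>N. \<exists>i\<ge>N. P i) \<Longrightarrow> infinite {i::nat. P i}"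
  by (simp add: infinite_nat_iff_unbounded_le)

lemma splice:
  assumes comp: "compressor (Q,\<delta>,I)"
    and acc: "accepting_run 3 (Q,\<delta>,I) qs als" and r0: "reads als 0 x" and r1: "reads als 1 y"
    and acc': "accepting_run 3 (Q,\<delta>,I) qs' als'" and r0': "reads als' 0 x'" and r1': "reads als' 1 y"
    and st: "qs m = qs' m'" and out: "pref als 2 m = pref als' 2 m'"
    and oc: "cnt als 1 m = cnt als' 1 m'" and ic: "cnt als 0 m = cnt als' 0 m'"
  shows "\<forall>i < cnt als 0 m. x i = x' i"
proof -
  define n where "n = cnt als 0 m"
  define qs'' where "qs'' i = (if i < m then qs i else qs' (i - m + m'))" for i
  define als'' where "als'' i = (if i < m then als i else als' (i - m + m'))" for i
  define x'' where "x'' i = (if i < n then x i else x' i)" for i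
  obtain w' where w': "reads als' 2 w'" using reads_exists[OF acc_inf[OF acc', of 2]] by auto
  have low: "pref als'' j N = pref als j N" if "N \<le> m" for j N
    using that by (intro pref_cong) (auto simp: als''_def)
  have shift: "(\<lambda>i. als'' (m + i)) = (\<lambda>i. als' (m' + i))" by (auto simp: als''_def add.commute)
  have pa: "pref als'' j (m + t) = pref als j m @ pref (\<lambda>i. als' (m' + i)) j t" for j t
    using pref_add[of als'' j m t] low[of m j] shift by (simp add: add.commute)
  have pb: "pref als' j (m' + t) = pref als' j m' @ pref (\<lambda>i. als' (m' + i)) j t" for j t
    by (rule pref_add)
  have N_cases: "N \<le> m \<or> (\<exists>t. N = m + t)" for N by presburger
  have tr: "(qs'' i, als'' i, qs'' (Suc i)) \<in> \<delta>" for i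
  proof -
    consider "Suc i < m" | "Suc i = m" | "m \<le> i" by linarith
    then show ?thesis
    proof cases
      case 1 then show ?thesis using acc_tr[OF acc, of i] by (simp add: qs''_def als''_def)
    next
      case 2 then show ?thesis using acc_tr[OF acc, of i] st by (simp add: qs''_def als''_def)
    next
      case 3
      then have "Suc i - m + m' = Suc (i - m + m')" by simp
      then show ?thesis using acc_tr[OF acc', of "i - m + m'"] 3 by (simp add: qs''_def als''_def)
    qed
  qed
  have init: "qs'' 0 \<in> I"
  proof (cases "m = 0")
    case True then show ?thesis using acc st unfolding accepting_run_def qs''_def by auto
  next
    case False then show ?thesis using acc unfolding accepting_run_def qs''_def by auto
  qed
  have inf: "infinite {i. als'' i ! j \<noteq> None}" if "j < 3" for j
  proof (rule unbounded_inf, intro allI)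
    fix N
    have "infinite {i. als' i ! j \<noteq> None}" using acc_inf[OF acc' that] .
    then have "\<exists>i'\<ge>N + m'. als' i' ! j \<noteq> None" by (simp add: infinite_nat_iff_unbounded_le)
    then obtain i' where i': "i' \<ge> N + m'" "als' i' ! j \<noteq> None" by blast
    have "als'' (i' - m' + m) = als' i'" using i'(1) unfolding als''_def by auto
    then show "\<exists>i\<ge>N. als'' i ! j \<noteq> None" using i' by (intro exI[of _ "i' - m' + m"]) auto
  qed
  have acc'': "accepting_run 3 (Q,\<delta>,I) qs'' als''"
    unfolding accepting_run_def using tr init inf by auto
  have p1: "pref als 1 m = pref als' 1 m'"
  proof -
    define c where "c = cnt als 1 m"
    have a: "pref als 1 m = map y [0..<c]" unfolding c_def by (rule reads_pref_eq[OF r1])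
    have b: "pref als' 1 m' = map y [0..<c]" unfolding c_def oc by (rule reads_pref_eq[OF r1'])
    show ?thesis using a b by (rule trans[OF _ sym])
  qed
  have rd1: "reads als'' 1 y" unfolding reads_iff_pref
  proof (intro allI impI)
    fix N k assume k: "k < cnt als'' 1 N"
    show "pref als'' 1 N ! k = y k"
    proof (cases "N \<le> m")
      case True then show ?thesis using k low reads_nth[OF r1] by simp
    next
      case False
      then obtain t where t: "N = m + t" using N_cases by blast
      have "pref als'' 1 N = pref als' 1 (m' + t)" using pa pb p1 t by simp
      then show ?thesis using k reads_nth[OF r1'] by simp
    qed
  qed
  have rd2: "reads als'' 2 w'" unfolding reads_iff_pref
  proof (intro allI impI)
    fix N k assume k: "k < cnt als'' 2 N"
    show "pref als'' 2 N ! k = w' k"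
    proof (cases "N \<le> m")
      case True
      then have e: "pref als'' 2 N = pref als 2 N" using low by simp
      have kN: "k < cnt als 2 N" using k e by simp
      have "pref als 2 N = take (cnt als 2 N) (pref als 2 m)" using True by (rule pref_prefix)
      then have "pref als 2 N ! k = pref als 2 m ! k" using kN by (metis nth_take)
      also have "\<dots> = pref als' 2 m' ! k" using out by simp
      also have "\<dots> = w' k"
      proof (rule reads_nth[OF w'])
        have "cnt als 2 N \<le> cnt als 2 m" using True by (rule cnt_mono)
        then show "k < cnt als' 2 m'" using kN out by (metis order_less_le_trans)
      qed
      finally show ?thesis using e by simp
    next
      case False
      then obtain t where t: "N = m + t" using N_cases by blast
      have "pref als'' 2 N = pref als' 2 (m' + t)" using pa pb out t by simp
      then show ?thesis using k reads_nth[OF w'] by simp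
    qed
  qed
  have rd0: "reads als'' 0 x''" unfolding reads_iff_pref
  proof (intro allI impI)
    fix N k assume k: "k < cnt als'' 0 N"
    show "pref als'' 0 N ! k = x'' k"
    proof (cases "N \<le> m")
      case True
      then have e: "pref als'' 0 N = pref als 0 N" using low by simp
      have kN: "k < cnt als 0 N" using k e by simp
      have "cnt als 0 N \<le> n" unfolding n_def using True by (rule cnt_mono)
      then show ?thesis using e kN reads_nth[OF r0] unfolding x''_def by simp
    next
      case False
      then obtain t where t: "N = m + t" using N_cases by blast
      have e: "pref als'' 0 N = pref als 0 m @ pref (\<lambda>i. als' (m' + i)) 0 t" using pa t by simp
      show ?thesis
      proof (cases "k < n")
        case True
        have "pref als'' 0 N ! k = pref als 0 m ! k" using e True unfolding n_def by (simp add: nth_append)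
        then show ?thesis using True reads_nth[OF r0] unfolding x''_def n_def by simp
      next
        case False
        have ln: "cnt als' 0 m' = n" using ic unfolding n_def by simp
        have "pref als'' 0 N ! k = pref (\<lambda>i. als' (m' + i)) 0 t ! (k - n)"
          using e False unfolding n_def by (simp add: nth_append)
        also have "\<dots> = pref als' 0 (m' + t) ! k" using pb[of 0 t] False ln by (simp add: nth_append)
        also have "\<dots> = x' k"
        proof (rule reads_nth[OF r0'])
          have "cnt als'' 0 N = cnt als' 0 (m' + t)" using e pb[of 0 t] ln unfolding n_def by simp
          then show "k < cnt als' 0 (m' + t)" using k by simp
        qed
        finally show ?thesis using False unfolding x''_def by simp
      qed
    qed
  qed
  have inj: "injective_compressor (Q,\<delta>,I)" using comp unfolding compressor_def by blast
  have xx: "x'' = x'" using inj[unfolded injective_compressor_def, rule_format, OF acc'' acc' rd0 r0' rd1 r1' rd2 w'] .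
  show ?thesis
  proof (intro allI impI)
    fix i assume i: "i < cnt als 0 m"
    have "x'' i = x' i" using xx by simp
    then show "x i = x' i" using i unfolding x''_def n_def by simp
  qed
qed



definition G :: "'a aut \<Rightarrow> (nat \<Rightarrow> 'a) \<Rightarrow> real \<Rightarrow> nat \<Rightarrow> (nat \<Rightarrow> 'a) set" where
  "G C y r n = {x. \<exists>qs als m. accepting_run 3 C qs als \<and> reads als 0 x \<and> reads als 1 y \<and>
      cnt als 0 m = n \<and> real (cnt als 2 m) < r * real n}"

definition U :: "'a aut \<Rightarrow> (nat \<Rightarrow> 'a) \<Rightarrow> real \<Rightarrow> nat \<Rightarrow> 'a list set" where
  "U C y r n = (\<lambda>x. map x [0..<n]) ` G C y r n"

lemma card_U:
  fixes y :: "nat \<Rightarrow> 'a::finite"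
  assumes comp: "compressor (Q,\<delta>,I)"
    and K: "\<forall>qs als m. accepting_run 3 (Q,\<delta>,I) qs als \<and> reads als 1 y \<and> cnt als 0 m = n \<longrightarrow> cnt als 1 m \<le> K"
  shows "card (U (Q,\<delta>,I) y r n) \<le> card Q * card {w::'a list. length w < nat \<lceil>r * real n\<rceil>} * (K + 1)"
proof -
  let ?C = "(Q,\<delta>,I)"
  let ?M = "nat \<lceil>r * real n\<rceil>"
  define P where "P u (z :: (nat \<Rightarrow> 'a) \<times> (nat \<Rightarrow> nat) \<times> (nat \<Rightarrow> 'a option list) \<times> nat) \<longleftrightarrow>
      (case z of (x, qs, als, m) \<Rightarrow> map x [0..<n] = u \<and> accepting_run 3 ?C qs als \<and> reads als 0 x \<and> reads als 1 y \<and>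
      cnt als 0 m = n \<and> real (cnt als 2 m) < r * real n)" for u z
  define wit where "wit u = (SOME z. P u z)" for u
  define \<phi> where "\<phi> u = (case wit u of (x, qs, als, m) \<Rightarrow> (qs m, pref als 2 m, cnt als 1 m))" for u
  have witP: "P u (wit u)" if "u \<in> U ?C y r n" for u
  proof -
    from that obtain x qs als m where "map x [0..<n] = u" "accepting_run 3 ?C qs als" "reads als 0 x" "reads als 1 y"
      "cnt als 0 m = n" "real (cnt als 2 m) < r * real n" unfolding U_def G_def by blast
    then have "P u (x, qs, als, m)" unfolding P_def by simp
    then show ?thesis unfolding wit_def by (rule someI)
  qed
  have aut: "is_automaton 3 ?C" using comp unfolding compressor_def by blast
  have finQ: "finite Q" using aut unfolding is_automaton_def by auto
  define T where "T = Q \<times> {w::'a list. length w < ?M} \<times> {..K}"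
  have finW: "finite {w::'a list. length w < ?M}"
    using finite_lists_length_le[of "UNIV :: 'a set" ?M] by (rule finite_subset[rotated]) auto
  have finT: "finite T" unfolding T_def using finQ finW by simp
  have maps: "\<phi> u \<in> T" if u: "u \<in> U ?C y r n" for u
  proof -
    obtain x qs als m where wu: "wit u = (x, qs, als, m)" by (cases "wit u") auto
    have p: "P u (x, qs, als, m)" using witP[OF u] wu by simp
    then have acc: "accepting_run 3 ?C qs als" and ry: "reads als 1 y" and c0: "cnt als 0 m = n"
      and c2: "real (cnt als 2 m) < r * real n" unfolding P_def by auto
    have "(qs m, als m, qs (Suc m)) \<in> \<delta>" by (rule acc_tr[OF acc])
    then have "qs m \<in> Q" using aut_len[OF aut] by blast
    moreover have "cnt als 1 m \<le> K" using K acc ry c0 by blast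
    moreover have "cnt als 2 m < ?M" using c2 by linarith
    ultimately show ?thesis unfolding \<phi>_def T_def using wu by simp
  qed
  have inj: "inj_on \<phi> (U ?C y r n)"
  proof (rule inj_onI)
    fix u1 u2 assume u1: "u1 \<in> U ?C y r n" and u2: "u2 \<in> U ?C y r n" and e: "\<phi> u1 = \<phi> u2"
    obtain x1 qs1 als1 m1 where w1: "wit u1 = (x1, qs1, als1, m1)" by (cases "wit u1") auto
    obtain x2 qs2 als2 m2 where w2: "wit u2 = (x2, qs2, als2, m2)" by (cases "wit u2") auto
    have p1: "P u1 (x1, qs1, als1, m1)" using witP[OF u1] w1 by simp
    have p2: "P u2 (x2, qs2, als2, m2)" using witP[OF u2] w2 by simp
    have e': "qs1 m1 = qs2 m2" "pref als1 2 m1 = pref als2 2 m2" "cnt als1 1 m1 = cnt als2 1 m2"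
      using e w1 w2 unfolding \<phi>_def by auto
    have a1: "map x1 [0..<n] = u1" "accepting_run 3 ?C qs1 als1" "reads als1 0 x1" "reads als1 1 y"
      "cnt als1 0 m1 = n" using p1 unfolding P_def by auto
    have a2: "map x2 [0..<n] = u2" "accepting_run 3 ?C qs2 als2" "reads als2 0 x2" "reads als2 1 y"
      "cnt als2 0 m2 = n" using p2 unfolding P_def by auto
    have "\<forall>i < cnt als1 0 m1. x1 i = x2 i"
      using splice[OF comp a1(2) a1(3) a1(4) a2(2) a2(3) a2(4) e'(1) e'(2) e'(3)] a1(5) a2(5) by simp
    then show "u1 = u2" using a1(1,5) a2(1) by auto
  qed
  have "card (U ?C y r n) \<le> card T" using card_inj_on_le[OF inj _ finT] maps by blast
  also have "card T = card Q * card {w::'a list. length w < ?M} * (K + 1)"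
    unfolding T_def by (simp add: card_cartesian_product algebra_simps)
  finally show ?thesis .
qed



lemma wm_prob: "prob_space (word_measure :: (nat \<Rightarrow> 'a::finite) measure)"
  unfolding word_measure_def
  by (intro prob_space_PiM prob_space_uniform_count_measure) auto

lemma wm_space: "space (word_measure :: (nat \<Rightarrow> 'a::finite) measure) = UNIV"
  unfolding word_measure_def by (simp add: space_PiM space_uniform_count_measure)

lemma cyl_eq:
  assumes "length u = n"
  shows "{x :: nat \<Rightarrow> 'a::finite. map x [0..<n] = u} =
    prod_emb UNIV (\<lambda>_. uniform_count_measure UNIV) {..<n} (\<Pi>\<^sub>E i\<in>{..<n}. {u!i})"
proof -
  have "map x [0..<n] = u \<longleftrightarrow> (\<forall>i<n. x i = u ! i)" for x :: "nat \<Rightarrow> 'a"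
    using assms by (auto simp: list_eq_iff_nth_eq)
  then show ?thesis
    by (auto simp: prod_emb_iff space_uniform_count_measure PiE_iff)
qed

lemma cyl_sets:
  assumes "length u = n"
  shows "{x :: nat \<Rightarrow> 'a::finite. map x [0..<n] = u} \<in> sets word_measure"
  unfolding cyl_eq[OF assms] word_measure_def
  by (rule sets_PiM_I) (auto simp: sets_uniform_count_measure)

lemma cyl_em:
  assumes "length u = n"
  shows "emeasure word_measure {x :: nat \<Rightarrow> 'a::finite. map x [0..<n] = u} = ennreal ((1 / real CARD('a))^n)"
proof -
  have "emeasure word_measure {x :: nat \<Rightarrow> 'a. map x [0..<n] = u} =
      (\<Prod>i\<in>{..<n}. emeasure (uniform_count_measure (UNIV :: 'a set)) {u!i})"
    unfolding cyl_eq[OF assms] word_measure_def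
    by (rule emeasure_PiM_emb) (auto intro: prob_space_uniform_count_measure simp: sets_uniform_count_measure)
  also have "\<dots> = (\<Prod>i\<in>{..<n}. ennreal (1 / real CARD('a)))"
    by (intro prod.cong refl) (simp add: emeasure_uniform_count_measure ennreal_of_nat_eq_real_of_nat
        divide_ennreal[symmetric])
  also have "\<dots> = ennreal ((1 / real CARD('a))^n)" by (simp add: prod_ennreal ennreal_power)
  finally show ?thesis .
qed

lemma S_sets:
  assumes "V \<subseteq> {u. length u = n}"
  shows "{x :: nat \<Rightarrow> 'a::finite. map x [0..<n] \<in> V} \<in> sets word_measure"
proof -
  have "finite {xs::'a list. set xs \<subseteq> UNIV \<and> length xs = n}" by (rule finite_lists_length_eq) simp
  then have "finite {xs::'a list. length xs = n}" by simp
  then have fin: "finite V" using assms finite_subset by blast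
  have "{x :: nat \<Rightarrow> 'a. map x [0..<n] \<in> V} = (\<Union>u\<in>V. {x. map x [0..<n] = u})" by auto
  also have "\<dots> \<in> sets word_measure" using fin assms by (intro sets.finite_UN cyl_sets) auto
  finally show ?thesis .
qed

lemma S_measure:
  assumes "V \<subseteq> {u. length u = n}"
  shows "measure word_measure {x :: nat \<Rightarrow> 'a::finite. map x [0..<n] \<in> V} \<le> real (card V) * (1 / real CARD('a))^n"
proof -
  interpret prob_space "word_measure :: (nat \<Rightarrow> 'a) measure" by (rule wm_prob)
  have "finite {xs::'a list. set xs \<subseteq> UNIV \<and> length xs = n}" by (rule finite_lists_length_eq) simp
  then have "finite {xs::'a list. length xs = n}" by simp
  then have fin: "finite V" using assms finite_subset by blast
  have "{x :: nat \<Rightarrow> 'a. map x [0..<n] \<in> V} = (\<Union>u\<in>V. {x. map x [0..<n] = u})" by auto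
  then have "measure word_measure {x :: nat \<Rightarrow> 'a. map x [0..<n] \<in> V} \<le>
      (\<Sum>u\<in>V. measure word_measure {x :: nat \<Rightarrow> 'a. map x [0..<n] = u})"
    using fin assms by (auto intro!: finite_measure_subadditive_finite cyl_sets)
  also have "\<dots> = (\<Sum>u\<in>V. (1 / real CARD('a))^n)"
    using assms by (intro sum.cong refl) (auto simp: measure_def cyl_em)
  also have "\<dots> = real (card V) * (1 / real CARD('a))^n" by simp
  finally show ?thesis .
qed



lemma geom_sum_le: "(a::nat) \<ge> 2 \<Longrightarrow> (\<Sum>i\<le>k. a^i) \<le> a ^ Suc k"
proof (induction k)
  case 0 then show ?case by simp
next
  case (Suc k)
  have "(\<Sum>i\<le>Suc k. a^i) = (\<Sum>i\<le>k. a^i) + a ^ Suc k" by simp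
  also have "\<dots> \<le> a ^ Suc k + a ^ Suc k" using Suc by simp
  also have "\<dots> = 2 * a ^ Suc k" by simp
  also have "\<dots> \<le> a * a ^ Suc k" using Suc.prems by (intro mult_right_mono) auto
  finally show ?case by simp
qed

lemma card_lists_lt:
  assumes "CARD('a::finite) \<ge> 2"
  shows "card {w::'a list. length w < M} \<le> CARD('a) ^ M"
proof (cases M)
  case 0 then show ?thesis by simp
next
  case (Suc k)
  have "{w::'a list. length w < M} = {xs. set xs \<subseteq> UNIV \<and> length xs \<le> k}" using Suc by auto
  then have "card {w::'a list. length w < M} = (\<Sum>i\<le>k. CARD('a)^i)"
    using card_lists_length_le[of "UNIV :: 'a set" k] by simp
  also have "\<dots> \<le> CARD('a) ^ M" using geom_sum_le[OF assms] Suc by simp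
  finally show ?thesis .
qed

lemma pow_ceil_bound:
  fixes a r :: real
  assumes a: "a \<ge> 1" and r: "r \<ge> 0"
  shows "a ^ nat \<lceil>r * real n\<rceil> \<le> a * (a powr r) ^ n"
proof -
  have a0: "a > 0" using a by simp
  have "a ^ nat \<lceil>r * real n\<rceil> = a powr real (nat \<lceil>r * real n\<rceil>)" using powr_realpow[OF a0] by simp
  also have "\<dots> \<le> a powr (1 + r * real n)"
  proof (rule powr_mono)
    have "r * real n \<ge> 0" using r by simp
    then have "real (nat \<lceil>r * real n\<rceil>) = real_of_int \<lceil>r * real n\<rceil>" by simp
    then show "real (nat \<lceil>r * real n\<rceil>) \<le> 1 + r * real n" by linarith
  qed (rule a)
  also have "\<dots> = a * (a powr r) ^ n"
    using a0 by (simp add: powr_add powr_power mult.commute)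
  finally show ?thesis .
qed



lemma null_C:
  fixes y :: "nat \<Rightarrow> 'a::finite" and r :: real
  assumes nor: "normal y" and comp: "compressor (Q,\<delta>,I)" and r0: "0 < r" and r1: "r < 1"
    and card2: "CARD('a) \<ge> 2"
  shows "\<exists>T\<in>null_sets (word_measure :: (nat \<Rightarrow> 'a) measure).
     {x. \<exists>qs als. accepting_run 3 (Q,\<delta>,I) qs als \<and> reads als 0 x \<and> reads als 1 y \<and>
        liminf (\<lambda>n. ereal (real (cnt als 2 n) / real (cnt als 0 n))) < ereal r} \<subseteq> T"
proof -
  let ?C = "(Q,\<delta>,I)"
  interpret P: prob_space "word_measure :: (nat \<Rightarrow> 'a) measure" by (rule wm_prob)
  have aut: "is_automaton 3 ?C" and det: "deterministic 2 ?C" using comp unfolding compressor_def by auto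
  define a where "a = real CARD('a)"
  have a2: "a \<ge> 2" using card2 unfolding a_def by simp
  define \<theta> where "\<theta> = a powr (r - 1)"
  have \<theta>0: "\<theta> > 0" unfolding \<theta>_def using a2 by simp
  have \<theta>1: "\<theta> < 1"
  proof -
    have "a powr (r - 1) < a powr 0" using a2 r1 by (intro powr_less_mono) auto
    then show ?thesis unfolding \<theta>_def using a2 by simp
  qed
  define \<epsilon> where "\<epsilon> = (1 / \<theta> - 1) / 2"
  have eps: "\<epsilon> > 0" unfolding \<epsilon>_def using \<theta>0 \<theta>1 by (simp add: field_simps)
  have \<theta>\<epsilon>: "\<theta> * (1 + \<epsilon>) = (1 + \<theta>) / 2" unfolding \<epsilon>_def using \<theta>0 by (simp add: field_simps)
  have \<theta>\<epsilon>1: "\<theta> * (1 + \<epsilon>) < 1" using \<theta>\<epsilon> \<theta>1 by simp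
  obtain u where u: "u \<noteq> []" "\<forall>s\<in>Q. Res ?C y s u" using universal[OF aut det] by blast
  obtain D where gap: "\<forall>p. \<exists>j. p \<le> length u * j \<and> real (length u * j) \<le> (1+\<epsilon>) * real p + D
            \<and> (\<forall>t<length u. y (length u * j + t) = u!t)" using normal_gap[OF nor u(1) eps] by blast
  have D0: "D \<ge> 0"
  proof -
    obtain j where j: "real (length u * j) \<le> (1+\<epsilon>) * real (0::nat) + D" using gap by blast
    have "0 \<le> real (length u * j)" by simp
    moreover have "(1+\<epsilon>) * real (0::nat) + D = D" by simp
    ultimately show ?thesis using j by linarith
  qed
  define E where "E = D + length u"
  have E0: "E \<ge> 0" unfolding E_def using D0 by simp
  define c where "c = (1+\<epsilon>+E)/\<epsilon>"
  have c0: "c \<ge> 0" unfolding c_def using eps E0 by simp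
  define Kn where "Kn n = nat \<lfloor>(E + c) * (1+\<epsilon>)^n\<rfloor>" for n
  have Kb: "\<forall>qs als m. accepting_run 3 ?C qs als \<and> reads als 1 y \<and> cnt als 0 m = n \<longrightarrow> cnt als 1 m \<le> Kn n" for n
  proof (intro allI impI)
    fix qs als m assume H: "accepting_run 3 ?C qs als \<and> reads als 1 y \<and> cnt als 0 m = n"
    have W: "\<forall>m. \<exists>m1\<ge>m. als m1 ! 0 \<noteq> None \<and> real (cnt als 1 m1) \<le> (1+\<epsilon>) * real (cnt als 1 m) + E"
      using wait[OF aut u(2) gap] H unfolding E_def by blast
    have "real (cnt als 1 m) + c \<le> (E + c) * (1+\<epsilon>)^n"
      using pos_bound[OF eps E0 W] H unfolding c_def by blast
    then have "real (cnt als 1 m) \<le> (E + c) * (1+\<epsilon>)^n" using c0 by linarith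
    then show "cnt als 1 m \<le> Kn n" unfolding Kn_def by (simp add: le_nat_floor)
  qed
  define S where "S n = {x :: nat \<Rightarrow> 'a. map x [0..<n] \<in> U ?C y r n}" for n
  have Ulen: "U ?C y r n \<subseteq> {u. length u = n}" for n unfolding U_def by auto
  have Ssets: "S n \<in> sets word_measure" for n unfolding S_def by (rule S_sets[OF Ulen])
  define cQ where "cQ = real (card Q)"
  have cQ0: "cQ \<ge> 0" unfolding cQ_def by simp
  define g where "g n = cQ * a * ((E + c) * (\<theta> * (1 + \<epsilon>))^n + \<theta>^n)" for n
  have Smeas: "measure word_measure (S n) \<le> g n" for n
  proof -
    let ?M = "nat \<lceil>r * real n\<rceil>"
    have "card (U ?C y r n) \<le> card Q * card {w::'a list. length w < ?M} * (Kn n + 1)"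
      by (rule card_U[OF comp Kb])
    also have "\<dots> \<le> card Q * CARD('a) ^ ?M * (Kn n + 1)"
      using card_lists_lt[OF card2] by (intro mult_right_mono mult_left_mono) auto
    finally have "real (card (U ?C y r n)) \<le> real (card Q * CARD('a) ^ ?M * (Kn n + 1))" by (rule of_nat_mono)
    then have cu: "real (card (U ?C y r n)) \<le> cQ * a ^ ?M * (real (Kn n) + 1)"
      unfolding cQ_def a_def by (simp add: algebra_simps)
    have kn: "real (Kn n) \<le> (E + c) * (1+\<epsilon>)^n"
    proof -
      have "(E + c) * (1+\<epsilon>)^n \<ge> 0" using E0 c0 eps by simp
      then show ?thesis unfolding Kn_def by simp
    qed
    have am: "a ^ ?M \<le> a * (a powr r)^n" using a2 r0 by (intro pow_ceil_bound) auto
    have "real (card (U ?C y r n)) \<le> cQ * (a * (a powr r)^n) * ((E + c) * (1+\<epsilon>)^n + 1)"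
    proof -
      have "cQ * a ^ ?M * (real (Kn n) + 1) \<le> cQ * (a * (a powr r)^n) * (real (Kn n) + 1)"
        using am cQ0 by (intro mult_right_mono mult_left_mono) auto
      also have "\<dots> \<le> cQ * (a * (a powr r)^n) * ((E + c) * (1+\<epsilon>)^n + 1)"
        using kn cQ0 a2 by (intro mult_left_mono) auto
      finally show ?thesis using cu by linarith
    qed
    moreover have "measure word_measure (S n) \<le> real (card (U ?C y r n)) * (1 / real CARD('a))^n"
      unfolding S_def by (rule S_measure[OF Ulen])
    ultimately have "measure word_measure (S n) \<le> cQ * (a * (a powr r)^n) * ((E + c) * (1+\<epsilon>)^n + 1) * (1/a)^n"
      unfolding a_def by (smt (verit) mult_right_mono zero_le_divide_1_iff zero_le_power of_nat_0_le_iff)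
    also have "\<dots> = cQ * a * ((E + c) * ((a powr r / a) * (1 + \<epsilon>))^n + (a powr r / a)^n)"
    proof -
      define A where "A = a powr r"
      have an: "a ^ n > 0" using a2 by simp
      have e1: "((A / a) * (1 + \<epsilon>))^n = A^n * (1 + \<epsilon>)^n / a^n" by (simp add: power_mult_distrib power_divide)
      have e2: "(A / a)^n = A^n / a^n" by (simp add: power_divide)
      have e3: "(1 / a)^n = 1 / a^n" by (simp add: power_divide)
      show ?thesis unfolding A_def[symmetric] e1 e2 e3 using an by (simp add: field_simps) (simp add: add_divide_distrib[symmetric] algebra_simps)
    qed
    also have "a powr r / a = \<theta>" unfolding \<theta>_def using a2 by (simp add: powr_diff)
    finally show ?thesis unfolding g_def .
  qed
  have sg: "summable g"
  proof -
    have "summable (\<lambda>n. (\<theta> * (1 + \<epsilon>))^n)" using \<theta>\<epsilon>1 \<theta>0 eps by (intro summable_geometric) simp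
    moreover have "summable (\<lambda>n. \<theta>^n)" using \<theta>1 \<theta>0 by (intro summable_geometric) simp
    ultimately show ?thesis unfolding g_def by (intro summable_mult summable_add) auto
  qed
  have sm: "summable (\<lambda>n. measure word_measure (S n))"
    by (rule summable_comparison_test[OF _ sg]) (use Smeas in auto)
  have nul: "limsup S \<in> null_sets word_measure"
    by (rule borel_cantelli_limsup1[OF Ssets _ sm]) (simp add: P.emeasure_finite less_top[symmetric])
  have sub: "{x. \<exists>qs als. accepting_run 3 ?C qs als \<and> reads als 0 x \<and> reads als 1 y \<and>
        liminf (\<lambda>n. ereal (real (cnt als 2 n) / real (cnt als 0 n))) < ereal r} \<subseteq> limsup S"
  proof
    fix x assume "x \<in> {x. \<exists>qs als. accepting_run 3 ?C qs als \<and> reads als 0 x \<and> reads als 1 y \<and>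
        liminf (\<lambda>n. ereal (real (cnt als 2 n) / real (cnt als 0 n))) < ereal r}"
    then obtain qs als where acc: "accepting_run 3 ?C qs als" and r0x: "reads als 0 x" and ry: "reads als 1 y"
      and li: "liminf (\<lambda>n. ereal (real (cnt als 2 n) / real (cnt als 0 n))) < ereal r" by blast
    have "\<exists>n\<ge>N. x \<in> S n" for N
    proof -
      obtain k where k: "Suc N \<le> cnt als 0 k" using cnt_unbounded[OF acc_inf[OF acc, of 0]] by auto
      obtain N' where N': "N' > k" "ereal (real (cnt als 2 N') / real (cnt als 0 N')) < ereal r"
        using liminf_upper_bound[OF li] by blast
      define n where "n = cnt als 0 N'"
      have "cnt als 0 k \<le> n" unfolding n_def using N'(1) by (intro cnt_mono) simp
      then have n: "n \<ge> Suc N" using k by simp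
      have "real (cnt als 2 N') / real n < r" using N'(2) unfolding n_def by simp
      then have "real (cnt als 2 N') < r * real n" using n by (simp add: divide_less_eq)
      then have "x \<in> G ?C y r n" unfolding G_def using acc r0x ry n_def by blast
      then have "x \<in> S n" unfolding S_def U_def by blast
      then show ?thesis using n by (intro exI[of _ n]) auto
    qed
    then show "x \<in> limsup S" unfolding limsup_INF_SUP by auto
  qed
  show ?thesis using nul sub by blast
qed



definition Td :: "nat \<Rightarrow> (nat \<times> 'a option list \<times> nat) set" where
  "Td m = {(i, [Some a, if i = 0 then Some a else None], Suc i mod m) | i a. i < m}"

definition Tm :: "nat \<Rightarrow> 'a aut" where
  "Tm m = ({..<m}, Td m, {0})"

lemma Tm_aut: "m \<ge> 1 \<Longrightarrow> is_automaton 2 (Tm m)"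
  unfolding Tm_def Td_def is_automaton_def by auto

lemma Tm_det: "deterministic 1 (Tm m)"
  unfolding Tm_def Td_def deterministic_def by auto

definition Tals :: "nat \<Rightarrow> (nat \<Rightarrow> 'a) \<Rightarrow> nat \<Rightarrow> 'a option list" where
  "Tals m x n = [Some (x n), if n mod m = 0 then Some (x n) else None]"

lemma Tm_run:
  assumes m: "m \<ge> 1"
  shows "accepting_run 2 (Tm m) (\<lambda>n. n mod m) (Tals m x)"
proof -
  have tr: "(n mod m, Tals m x n, Suc n mod m) \<in> Td m" for n
  proof -
    have "Suc (n mod m) mod m = Suc n mod m" by (simp add: mod_Suc_eq)
    then show ?thesis unfolding Td_def Tals_def using m by force
  qed
  have inf0: "infinite {i. Tals m x i ! 0 \<noteq> None}" unfolding Tals_def by simp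
  have inf1: "infinite {i. Tals m x i ! 1 \<noteq> None}"
  proof (rule unbounded_inf, intro allI)
    fix N
    have "m * N mod m = 0" by simp
    moreover have "N \<le> m * N" using m by simp
    ultimately show "\<exists>i\<ge>N. Tals m x i ! 1 \<noteq> None" unfolding Tals_def by (intro exI[of _ "m * N"]) auto
  qed
  show ?thesis unfolding accepting_run_def Tm_def
    using tr inf0 inf1 by (auto simp: less_2_cases_iff)
qed

lemma Tm_pref0: "pref (Tals m x) 0 n = map x [0..<n]"
  by (induction n) (simp_all add: pref_Suc symb_def Tals_def)

lemma Tm_reads0: "reads (Tals m x) 0 x"
  unfolding reads_def by (simp add: Tm_pref0)

lemma Tm_cnt1:
  assumes "m \<ge> 1"
  shows "cnt (Tals m x) 1 (m * k) = k"
proof (induction k)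
  case 0 then show ?case by simp
next
  case (Suc k)
  have "cnt (Tals m x) 1 (m * k + t) = k + (if t = 0 then 0 else 1)" if "t \<le> m" for t
    using that
  proof (induction t)
    case 0 then show ?case using Suc.IH by simp
  next
    case (Suc t)
    have "(m * k + t) mod m = t mod m" by simp
    moreover have "t mod m = 0 \<longleftrightarrow> t = 0" using Suc.prems by auto
    ultimately show ?case using Suc by (simp add: cnt_Suc Tals_def)
  qed
  from this[of m] show ?case using assms by (simp add: add.commute)
qed

lemma Tm_liminf:
  assumes m: "m \<ge> 1"
  shows "liminf (\<lambda>n. ereal (real (cnt (Tals m x) 1 n) / real (cnt (Tals m x) 0 n))) \<le> ereal (1 / real m)"
proof -
  let ?f = "\<lambda>n. ereal (real (cnt (Tals m x) 1 n) / real (cnt (Tals m x) 0 n))"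
  have fv: "?f (m * Suc k) = ereal (1 / real m)" for k
  proof -
    have "cnt (Tals m x) 0 (m * Suc k) = m * Suc k" using Tm_pref0[of m x] by simp
    moreover have "real m + real m * real k = real m * (1 + real k)" by (simp add: algebra_simps)
    ultimately show ?thesis using Tm_cnt1[OF m, of x "Suc k"] m by simp
  qed
  show ?thesis unfolding liminf_SUP_INF
  proof (rule SUP_least)
    fix N
    have "1 * N \<le> m * N" using m by (rule mult_le_mono1)
    moreover have "m * N \<le> m * Suc N" by simp
    ultimately have "N \<le> m * Suc N" by linarith
    then have "(INF n\<in>{N..}. ?f n) \<le> ?f (m * Suc N)" by (intro INF_lower) simp
    then show "(INF n\<in>{N..}. ?f n) \<le> ereal (1 / real m)" using fv by simp
  qed
qed

lemma Tm_inj: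
  assumes "m = 1 \<or> CARD('a::finite) = 1"
  shows "injective_transducer (Tm m :: 'a aut)"
  unfolding injective_transducer_def
proof (intro allI impI)
  fix qs als qs' als' and x x' v :: "nat \<Rightarrow> 'a"
  assume acc: "accepting_run 2 (Tm m) qs als" and acc': "accepting_run 2 (Tm m) qs' als'"
    and r0: "reads als 0 x" and r0': "reads als' 0 x'" and r1: "reads als 1 v" and r1': "reads als' 1 v"
  show "x = x'"
  proof (cases "m = 1")
    case True
    have key: "xx = vv" if acc: "accepting_run 2 (Tm m) qs als" and r0: "reads als 0 xx" and r1: "reads als 1 vv"
      for qs als and xx vv :: "nat \<Rightarrow> 'a"
    proof
      fix k
      have eq: "als i ! 0 = als i ! 1" for i
        using acc_tr[of 2 "{..<m}" "Td m" "{0}" qs als i] acc True unfolding Tm_def Td_def by auto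
      have pe: "pref als 0 n = pref als 1 n" for n unfolding pref_def using eq by simp
      have acc2: "accepting_run 2 ({..<m}, Td m, {0}) qs als" using acc unfolding Tm_def .
      obtain n where n: "Suc k \<le> cnt als 0 n" using cnt_unbounded[OF acc_inf[OF acc2, of 0]] by auto
      have "xx k = pref als 0 n ! k" using reads_nth[OF r0, of k n] n by simp
      also have "\<dots> = pref als 1 n ! k" using pe by simp
      also have "\<dots> = vv k" using reads_nth[OF r1, of k n] n pe by simp
      finally show "xx k = vv k" .
    qed
    show ?thesis using key[OF acc r0 r1] key[OF acc' r0' r1'] by simp
  next
    case False
    then have c1: "CARD('a) = 1" using assms by simp
    then obtain z :: 'a where "UNIV = {z}" using card_1_singletonE by blast
    then have az: "\<And>a::'a. a = z" by auto
    show ?thesis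
    proof
      fix i show "x i = x' i" using az[of "x i"] az[of "x' i"] by simp
    qed
  qed
qed

lemma rho_le:
  assumes m: "m \<ge> 1" and mc: "m = 1 \<or> CARD('a::finite) = 1"
  shows "rho (x :: nat \<Rightarrow> 'a) \<le> ereal (1 / real m)"
proof -
  have mem: "(Tm m, (\<lambda>n. n mod m), Tals m x) \<in> {(T, qs, als). is_automaton 2 T \<and> deterministic 1 T \<and>
              injective_transducer T \<and> accepting_run 2 T qs als \<and> reads als 0 x}"
    using Tm_aut[OF m] Tm_det Tm_inj[OF mc] Tm_run[OF m] Tm_reads0 by auto
  have "rho x \<le> liminf (\<lambda>n. ereal (real (length (pref (Tals m x) 1 n)) / real (length (pref (Tals m x) 0 n))))"
    unfolding rho_def by (rule INF_lower2[OF mem]) simp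
  also have "\<dots> \<le> ereal (1 / real m)" by (rule Tm_liminf[OF m])
  finally show ?thesis .
qed

lemma rho_cond_nonneg: "0 \<le> rho_cond x y"
  unfolding rho_cond_def
proof (rule INF_greatest)
  fix z assume "z \<in> {(C, qs, als). compressor C \<and> accepting_run 3 C qs als \<and> reads als 0 x \<and> reads als 1 y}"
  obtain C qs als where z: "z = (C, qs, als)" by (cases z) auto
  have "0 \<le> liminf (\<lambda>n. ereal (real (length (pref als 2 n)) / real (length (pref als 0 n))))"
    by (rule Liminf_bounded) simp
  then show "0 \<le> (case z of (C, qs, als) \<Rightarrow> liminf (\<lambda>n. ereal (real (length (pref als 2 n)) / real (length (pref als 0 n)))))"
    using z by simp
qed



lemma countable_comps: "countable {C :: ('a::finite) aut. compressor C}"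
proof -
  have fl: "finite {\<alpha> :: 'a option list. length \<alpha> = 3}"
  proof -
    have "finite {xs :: 'a option list. set xs \<subseteq> UNIV \<and> length xs = 3}" by (rule finite_lists_length_eq) simp
    then show ?thesis by simp
  qed
  have "{C :: 'a aut. compressor C} \<subseteq> Collect finite \<times> Collect finite \<times> Collect finite"
  proof
    fix C :: "'a aut" assume "C \<in> {C. compressor C}"
    then have aut: "is_automaton 3 C" unfolding compressor_def by auto
    obtain Q \<delta> I where C: "C = (Q, \<delta>, I)" by (cases C) auto
    have fQ: "finite Q" and IQ: "I \<subseteq> Q" and d: "\<forall>(p,\<alpha>,q)\<in>\<delta>. p \<in> Q \<and> q \<in> Q \<and> length \<alpha> = 3"
      using aut unfolding C is_automaton_def by auto
    have "\<delta> \<subseteq> Q \<times> {\<alpha>. length \<alpha> = 3} \<times> Q" using d by auto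
    moreover have "finite (Q \<times> {\<alpha> :: 'a option list. length \<alpha> = 3} \<times> Q)" using fQ fl by simp
    ultimately have "finite \<delta>" by (rule finite_subset)
    moreover have "finite I" using fQ IQ by (rule finite_subset[rotated])
    ultimately show "C \<in> Collect finite \<times> Collect finite \<times> Collect finite" using C fQ by simp
  qed
  moreover have "countable (Collect finite \<times> Collect finite \<times> (Collect finite :: nat set set) ::
      (nat set \<times> (nat \<times> 'a option list \<times> nat) set \<times> nat set) set)"
    by (intro countable_SIGMA countable_Collect_finite)
  ultimately show ?thesis by (rule countable_subset)
qed

theorem theorem19:
  fixes y :: "nat \<Rightarrow> 'a::finite"
  assumes "normal y"
  shows "{x. rho_cond x y < rho x} \<in> null_sets (completion (word_measure :: (nat \<Rightarrow> 'a) measure))"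
proof (cases "CARD('a) \<ge> 2")
  case False
  have "CARD('a) > 0" by (rule finite_UNIV_card_ge_0) simp
  then have c1: "CARD('a) = 1" using False by linarith
  have le: "rho x \<le> rho_cond x y" for x :: "nat \<Rightarrow> 'a"
  proof -
    have rm: "rho x \<le> ereal (1 / real m)" if "m \<ge> 1" for m
      using c1 by (intro rho_le[OF that]) simp
    have "rho x \<le> 0"
    proof (rule ereal_le_epsilon2)
      fix e :: real assume e: "0 < e"
      obtain m where m: "m > 0" "inverse (real m) < e" using ex_inverse_of_nat_less[OF e] by blast
      have "rho x \<le> ereal (1 / real m)" using rm m(1) by simp
      also have "ereal (1 / real m) \<le> 0 + ereal e" using m(2) by (simp add: inverse_eq_divide)
      finally show "rho x \<le> 0 + ereal e" .
    qed
    also have "0 \<le> rho_cond x y" by (rule rho_cond_nonneg)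
    finally show ?thesis .
  qed
  have "{x. rho_cond x y < rho x} = {}"
  proof (rule equals0I)
    fix x assume "x \<in> {x. rho_cond x y < rho x}"
    then have "rho_cond x y < rho x" by simp
    then show False using le[of x] by simp
  qed
  then show ?thesis by simp
next
  case True
  let ?M = "word_measure :: (nat \<Rightarrow> 'a) measure"
  define r where "r j = 1 - 1 / (real j + 2)" for j :: nat
  have r0: "0 < r j" and r1: "r j < 1" for j unfolding r_def by (auto simp: field_simps)
  define N where "N C j = {x. \<exists>qs als. accepting_run 3 C qs als \<and> reads als 0 x \<and> reads als 1 y \<and>
        liminf (\<lambda>n. ereal (real (cnt als 2 n) / real (cnt als 0 n))) < ereal (r j)}" for C j
  have exT: "\<exists>T\<in>null_sets ?M. N C j \<subseteq> T" if "compressor C" for C j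
  proof -
    obtain Q \<delta> I where C: "C = (Q, \<delta>, I)" by (cases C) auto
    show ?thesis unfolding N_def C using null_C[OF assms that[unfolded C] r0 r1 True] .
  qed
  define T where "T Cj = (SOME T. T \<in> null_sets ?M \<and> N (fst Cj) (snd Cj) \<subseteq> T)" for Cj
  have T: "T (C, j) \<in> null_sets ?M \<and> N C j \<subseteq> T (C, j)" if "compressor C" for C j
  proof -
    have "\<exists>T. T \<in> null_sets ?M \<and> N C j \<subseteq> T" using exT[OF that, of j] by blast
    from someI_ex[OF this] show ?thesis unfolding T_def by simp
  qed
  define I where "I = {C :: 'a aut. compressor C} \<times> (UNIV :: nat set)"
  have cI: "countable I" unfolding I_def using countable_comps by (intro countable_SIGMA) auto
  have TI: "(\<Union>i\<in>I. T i) \<in> null_sets ?M"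
    by (rule null_sets_UN'[OF cI]) (auto simp: I_def T)
  have sub: "{x. rho_cond x y < rho x} \<subseteq> (\<Union>i\<in>I. T i)"
  proof
    fix x assume "x \<in> {x. rho_cond x y < rho x}"
    then have lt: "rho_cond x y < rho x" by simp
    have "rho x \<le> ereal (1 / real (1::nat))" by (rule rho_le) auto
    then have "rho x \<le> 1" by (simp add: one_ereal_def)
    then have "rho_cond x y < 1" using lt by (rule order_less_le_trans[rotated])
    then obtain z where z: "z \<in> {(C, qs, als). compressor C \<and> accepting_run 3 C qs als \<and> reads als 0 x \<and> reads als 1 y}"
      and zl: "(case z of (C, qs, als) \<Rightarrow> liminf (\<lambda>n. ereal (real (length (pref als 2 n)) / real (length (pref als 0 n))))) < 1"
      unfolding rho_cond_def INF_less_iff by blast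
    obtain C qs als where zz: "z = (C, qs, als)" by (cases z) auto
    have comp: "compressor C" and acc: "accepting_run 3 C qs als" and rx: "reads als 0 x" and ry: "reads als 1 y"
      using z zz by auto
    have li: "liminf (\<lambda>n. ereal (real (cnt als 2 n) / real (cnt als 0 n))) < 1" using zl zz by simp
    obtain t :: real where t: "liminf (\<lambda>n. ereal (real (cnt als 2 n) / real (cnt als 0 n))) < ereal t" "ereal t < 1"
      using ereal_dense2[OF li] by blast
    have "1 - t > 0" using t(2) by simp
    then obtain k where k: "k > 0" "inverse (real k) < 1 - t" using ex_inverse_of_nat_less by blast
    have "t \<le> r k"
    proof -
      have "1 / (real k + 2) \<le> inverse (real k)" using k(1) by (simp add: inverse_eq_divide frac_le)
      then show ?thesis unfolding r_def using k(2) by linarith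
    qed
    then have "liminf (\<lambda>n. ereal (real (cnt als 2 n) / real (cnt als 0 n))) < ereal (r k)"
      using t(1) by (meson ereal_less_eq(3) order_less_le_trans)
    then have "x \<in> N C k" unfolding N_def using acc rx ry by blast
    then have "x \<in> T (C, k)" using T[OF comp] by blast
    moreover have "(C, k) \<in> I" unfolding I_def using comp by simp
    ultimately show "x \<in> (\<Union>i\<in>I. T i)" by blast
  qed
  show ?thesis
    by (rule null_sets_completion_subset[OF sub null_sets_completionI[OF TI]])
qed

end
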